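(* Let $m$ be a positive integer and let $h_c, h_r$ be independent random variables such that each of $|h_c|^2$ and $|h_r|^2$ has density $f(x)=\frac{m^m}{\Gamma(m)}x^{m-1}e^{-mx}$, $x>0$. Let $P_c,P_r,P_{BS},C_c,C_r,d_c,d_r,\alpha_c,\alpha_r,\beta_{semi},B,\sigma_\tau^2,\sigma^2,\gamma_{th},\gamma_{SIC}$ be positive constants and $\gamma^2=(2\pi)^2/12$. Put $\bar I = P_{BS}C_r d_r^{-\alpha_r}\gamma^2\beta_{semi}^2B^2\sigma_\tau^2$, $$\gamma_c^I=\frac{P_c C_c d_c^{-\alpha_c}|h_c|^2}{P_r C_c d_r^{-\alpha_c}|h_r|^2+\bar I+\sigma^2},\qquad \gamma_r^I=\frac{P_r C_c d_r^{-\alpha_c}|h_r|^2}{\bar I+\sigma^2}.$$ Define $a_1=\frac{\bar I}{C_c d_c^{-\alpha_c}}$, $a_2=\frac{\sigma^2}{C_c d_c^{-\alpha_c}}$, $a_3=\frac{d_r^{-\alpha_c}}{d_c^{-\alpha_c}}$, $a_4=\frac{\bar I}{C_c d_r^{-\alpha_c}}$, $a_5=\frac{\sigma^2}{C_c d_r^{-\alpha_c}}$. Then $\mathbb{P}_r^I:=1-\Pr\{\gamma_c^I>\gamma_{SIC},\ \gamma_r^I>\gamma_{th}\}$ equals $$1-\sum_{p=0}^{m-1}\sum_{r=0}^{p}\binom{p}{r}\frac{(a_1+a_2)^{p-r}(a_3P_r)^r}{\Gamma(m)\,m^r\,p!}\Big(\frac{m\gamma_{SIC}}{P_c}\Big)^p\exp\!\Big(-\frac{m\gamma_{SIC}(a_1+a_2)}{P_c}\Big)\Big(\frac{\gamma_{SIC}a_3P_r}{P_c}+1\Big)^{-(r+m)}\Gamma\!\Big(r+m,\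 \frac{\gamma_{th}m(a_4+a_5)}{P_r}\Big(\frac{\gamma_{SIC}a_3P_r}{P_c}+1\Big)\Big).$$
   Context: Setting: uplink NOMA-assisted semi-integrated sensing and communication with a near communication transmitter (distance $d_c$, power $P_c$) and a far radar target (distance $d_r$, uplink power $P_r$); communication path loss $C_c d^{-\alpha_c}$; Nakagami-$m$ unit-mean independent small-scale power gains $|h_c|^2,|h_r|^2$; radar echo interference (BS power $P_{BS}$, echo path loss $C_r d_r^{-\alpha_r}$, sensing bandwidth fraction $\beta_{semi}$ of bandwidth $B$, time-delay variance $\sigma_\tau^2$) replaced by its mean $\bar I$. The BS first decodes the transmitter's signal (success iff $\gamma_c^I>\gamma_{SIC}$, the SIC threshold), removes it, then decodes the target's communication signal with SINR $\gamma_r^I$ and threshold $\gamma_{th}$; $\mathbb{P}_r^I$ is the target's outage probability. $\Gamma(\cdot,\cdot)$ is the upper incomplete Gamma function, $\Gamma(\cdot)$ the Gamma function, $\binom{p}{r}=p!/(r!(p-r)!)$. *)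

theory Defs
  imports "HOL-Probability.Probability"
begin

definition upper_Gamma :: "real \<Rightarrow> real \<Rightarrow> real" where
  "upper_Gamma s x = (LBINT t:{x<..}. t powr (s - 1) * exp (- t))"

definition nakagami_pow_density :: "nat \<Rightarrow> real \<Rightarrow> real" where
  "nakagami_pow_density m x =
     (if x > 0 then real m ^ m / Gamma (real m) * x ^ (m - 1) * exp (- real m * x) else 0)"

end

theory Submission
  imports Defs
begin

lemma upper_Gamma_nonneg: "upper_Gamma s a \<ge> 0"
  unfolding upper_Gamma_def
  unfolding set_lebesgue_integral_def by (auto intro!: integral_nonneg_AE)

lemma tail_pow_exp:
  fixes a :: real assumes a: "0 \<le> a"
  shows "(\<integral>\<^sup>+x. ennreal (x^n * exp (-x)) * indicator {a<..} x \<partial>lborel)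
         = ennreal (upper_Gamma (real (Suc n)) a)"
proof -
  let ?N = "(\<integral>\<^sup>+x. ennreal (x^n * exp (-x)) * indicator {a<..} x \<partial>lborel)"
  have "?N \<le> (\<integral>\<^sup>+x. ennreal (x^n * exp (-x)) * indicator {0..} x \<partial>lborel)"
    using a by (intro nn_integral_mono) (auto split: split_indicator)
  also have "\<dots> = real_of_nat (fact n)" by (rule nn_intergal_power_times_exp_Ici)
  finally have "?N \<le> ennreal (fact n)" by simp
  then have fin: "?N < top" by (rule le_less_trans) simp
  have "upper_Gamma (real (Suc n)) a
     = enn2real (\<integral>\<^sup>+t. ennreal (indicator {a<..} t *\<^sub>R (t powr (real (Suc n) - 1) * exp (- t))) \<partial>lborel)"
    unfolding upper_Gamma_def set_lebesgue_integral_def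
    by (rule integral_eq_nn_integral) auto
  also have "(\<integral>\<^sup>+t. ennreal (indicator {a<..} t *\<^sub>R (t powr (real (Suc n) - 1) * exp (- t))) \<partial>lborel) = ?N"
    using a by (intro nn_integral_cong) (auto split: split_indicator simp: powr_realpow)
  finally show ?thesis using fin by simp
qed

lemma tail_pow_exp_scaled:
  fixes \<kappa> y0 :: real assumes k: "0 < \<kappa>" and y0: "0 \<le> y0"
  shows "(\<integral>\<^sup>+y. ennreal (y^n * exp (-\<kappa>*y)) * indicator {y0<..} y \<partial>lborel)
         = ennreal (\<kappa> powr (-(real n + 1)) * upper_Gamma (real (Suc n)) (\<kappa>*y0))"
proof -
  have "(\<integral>\<^sup>+y. ennreal (y^n * exp (-\<kappa>*y)) * indicator {y0<..} y \<partial>lborel)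
      = ennreal (1/\<kappa>) * (\<integral>\<^sup>+x. ennreal ((0 + 1/\<kappa>*x)^n * exp (-\<kappa>*(0 + 1/\<kappa>*x))) * indicator {y0<..} (0 + 1/\<kappa>*x) \<partial>lborel)"
    using k by (subst nn_integral_real_affine[where c="1/\<kappa>" and t=0]) auto
  also have "(\<integral>\<^sup>+x. ennreal ((0 + 1/\<kappa>*x)^n * exp (-\<kappa>*(0 + 1/\<kappa>*x))) * indicator {y0<..} (0 + 1/\<kappa>*x) \<partial>lborel)
     = (\<integral>\<^sup>+x. ennreal (1/\<kappa>^n) * (ennreal (x^n * exp (-x)) * indicator {\<kappa>*y0<..} x) \<partial>lborel)"
    using k by (intro nn_integral_cong) (auto split: split_indicator simp: ennreal_mult'[symmetric] power_divide field_simps)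
  also have "\<dots> = ennreal (1/\<kappa>^n) * ennreal (upper_Gamma (real (Suc n)) (\<kappa>*y0))"
    using k y0 by (subst nn_integral_cmult) (auto simp: tail_pow_exp)
  moreover have "\<kappa> powr (real n + 1) = \<kappa>^Suc n" using powr_realpow[of \<kappa> "Suc n"] k by (simp add: add.commute)
  then have "\<kappa> powr (-(real n + 1)) = 1/\<kappa>^n * (1/\<kappa>)" using k by (subst powr_minus) (simp add: divide_simps)
  then have "\<kappa> powr (-(real n + 1)) * upper_Gamma (real (Suc n)) (\<kappa>*y0)
     = (1/\<kappa>) * ((1/\<kappa>^n) * upper_Gamma (real (Suc n)) (\<kappa>*y0))" by simp
  have "ennreal (\<kappa> powr (-(real n + 1)) * upper_Gamma (real (Suc n)) (\<kappa>*y0))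
     = ennreal (1/\<kappa>) * (ennreal (1/\<kappa>^n) * ennreal (upper_Gamma (real (Suc n)) (\<kappa>*y0)))"
  proof -
    have e1: "ennreal ((1/\<kappa>^n) * upper_Gamma (real (Suc n)) (\<kappa>*y0)) = ennreal (1/\<kappa>^n) * ennreal (upper_Gamma (real (Suc n)) (\<kappa>*y0))"
      using k upper_Gamma_nonneg by (intro ennreal_mult) auto
    have e2: "ennreal ((1/\<kappa>) * ((1/\<kappa>^n) * upper_Gamma (real (Suc n)) (\<kappa>*y0))) = ennreal (1/\<kappa>) * ennreal ((1/\<kappa>^n) * upper_Gamma (real (Suc n)) (\<kappa>*y0))"
      using k upper_Gamma_nonneg by (intro ennreal_mult) auto
    show ?thesis unfolding \<open>\<kappa> powr (-(real n + 1)) * upper_Gamma (real (Suc n)) (\<kappa>*y0)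
     = (1/\<kappa>) * ((1/\<kappa>^n) * upper_Gamma (real (Suc n)) (\<kappa>*y0))\<close> e2 e1 ..
  qed
  ultimately show ?thesis by simp
qed

lemma erlang_tail:
  fixes c :: real assumes c: "0 \<le> c" and l: "0 < l"
  shows "(\<integral>\<^sup>+x. ennreal (erlang_density k l x) * indicator {c<..} x \<partial>lborel)
       = ennreal (\<Sum>p<Suc k. (l*c)^p * exp (-(l*c)) / fact p)"
proof -
  let ?S = "\<Sum>p\<le>k. (l*c)^p * exp (-(l*c)) / fact p"
  let ?T = "(\<integral>\<^sup>+x. ennreal (erlang_density k l x) * indicator {c<..} x \<partial>lborel)"
  have tot: "(\<integral>\<^sup>+x. ennreal (erlang_density k l x) \<partial>lborel) = 1"
    using nn_integral_erlang_ith_moment[OF l, of k 0] by simp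
  have "(\<integral>\<^sup>+x. ennreal (erlang_density k l x) * indicator {.. c} x \<partial>lborel) + ?T
      = (\<integral>\<^sup>+x. ennreal (erlang_density k l x) * indicator {.. c} x + ennreal (erlang_density k l x) * indicator {c<..} x \<partial>lborel)"
    by (rule nn_integral_add[symmetric]) auto
  also have "\<dots> = (\<integral>\<^sup>+x. ennreal (erlang_density k l x) \<partial>lborel)"
    by (intro nn_integral_cong) (auto split: split_indicator)
  also have "\<dots> = 1" by (rule tot)
  finally have "ennreal (erlang_CDF k l c) + ?T = 1"
    by (simp only: nn_integral_erlang_density[OF l, of k c])
  moreover have "erlang_CDF k l c = 1 - ?S" using c by (simp add: erlang_CDF_def)
  moreover have "?S \<le> 1" using erlang_CDF_nonneg[OF l, of k c] c by (simp add: erlang_CDF_def)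
  moreover have "?S \<ge> 0"
  proof (intro sum_nonneg)
    fix p assume "p \<in> {..k}"
    have "0 \<le> l*c" using c l by simp
    then show "0 \<le> (l*c)^p * exp (-(l*c)) / fact p" by simp
  qed
  ultimately have "ennreal (1 - ?S) + ?T = 1" by simp
  then have "?T = 1 - ennreal (1 - ?S)"
    using ennreal_add_diff_cancel_left[of "ennreal (1 - ?S)" ?T] by simp
  also have "\<dots> = ennreal ?S" using \<open>?S \<le> 1\<close> \<open>?S \<ge> 0\<close>
    by (simp add: ennreal_minus flip: ennreal_1)
  finally show ?thesis by (simp add: lessThan_Suc_atMost)
qed

lemma nakagami_erlang:
  assumes "m = Suc k"
  shows "AE x in lborel. ennreal (nakagami_pow_density m x) = ennreal (erlang_density k (real m) x)"
  using AE_lborel_singleton[of 0]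
proof eventually_elim
  case (elim x)
  have "Gamma (real m) = fact k" using assms Gamma_fact[of k] by (simp add: add.commute)
  then show ?case using elim assms
    by (auto simp: nakagami_pow_density_def erlang_density_def)
qed

lemma pointwise_identity:
  fixes y t b A :: real and k :: nat
  assumes y: "0 \<le> y"
  defines "l \<equiv> real (Suc k)"
  shows "erlang_density k l y * (\<Sum>p<Suc k. (l * (t*(b*y + A)))^p * exp (-(l * (t*(b*y + A)))) / fact p)
    = (\<Sum>p<Suc k. \<Sum>r\<le>p. (l^(Suc k)/fact k * (real (p choose r) * A^(p-r) * b^r * (l*t)^p * exp (-(l*t*A)) / fact p))
          * (y^(k+r) * exp (-(l*(t*b+1))*y)))"
proof -
  have g: "erlang_density k l y = l^(Suc k) * y^k * exp (-l*y) / fact k"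
    using y by (simp add: erlang_density_def)
  have E: "exp (-(l * (t*(b*y + A)))) = exp (-(l*t*A)) * exp (-(l*t*b*y))"
    by (simp add: exp_add[symmetric] algebra_simps)
  have E2: "exp (-(l*(t*b+1))*y) = exp (-l*y) * exp (-(l*t*b*y))"
    by (simp add: exp_add[symmetric] algebra_simps)
  have P: "(l * (t*(b*y + A)))^p = (l*t)^p * (\<Sum>r\<le>p. real (p choose r) * (b*y)^r * A^(p-r))" for p
  proof -
    have "(l * (t*(b*y + A)))^p = (l*t)^p * (b*y+A)^p" by (simp add: power_mult_distrib)
    then show ?thesis by (simp only: binomial_ring)
  qed
  have per: "erlang_density k l y * ((l * (t*(b*y + A)))^p * exp (-(l * (t*(b*y + A)))) / fact p)
     = (\<Sum>r\<le>p. (l^(Suc k)/fact k * (real (p choose r) * A^(p-r) * b^r * (l*t)^p * exp (-(l*t*A)) / fact p))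
          * (y^(k+r) * exp (-(l*(t*b+1))*y)))" for p
    unfolding g E E2 P sum_distrib_left sum_distrib_right sum_divide_distrib
    by (intro sum.cong refl) (simp add: power_add power_mult_distrib field_simps)
  show ?thesis by (subst sum_distrib_left) (rule sum.cong[OF refl per])
qed

lemma main_prob:
  fixes M :: "'w measure" and X Y :: "'w \<Rightarrow> real" and t b A y0 :: real
  assumes P: "prob_space M" and mk: "m = Suc k"
    and gX: "distributed M lborel X (\<lambda>x. ennreal (erlang_density k (real m) x))"
    and gY: "distributed M lborel Y (\<lambda>x. ennreal (erlang_density k (real m) x))"
    and ind: "prob_space.indep_var M borel X borel Y"
    and t: "0 \<le> t" and b: "0 \<le> b" and A: "0 \<le> A" and y0: "0 < y0"
  shows "measure M {\<omega>\<in>space M. t*(b*Y \<omega> + A) < X \<omega> \<and> y0 < Y \<omega>}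
    = (\<Sum>p<m. \<Sum>r\<le>p. (real m^(Suc k)/fact k * (real (p choose r) * A^(p-r) * b^r * (real m*t)^p * exp (-(real m*t*A)) / fact p))
        * ((real m*(t*b+1)) powr (-(real (k+r)+1)) * upper_Gamma (real (Suc (k+r))) (real m*(t*b+1)*y0)))"
proof -
  interpret prob_space M by (rule P)
  define l where "l = real m"
  define g where "g = erlang_density k l"
  define \<kappa> where "\<kappa> = l*(t*b+1)"
  define coef where "coef = (\<lambda>p r. l^(Suc k)/fact k * (real (p choose r) * A^(p-r) * b^r * (l*t)^p * exp (-(l*t*A)) / fact p))"
  have l: "0 < l" using mk l_def by simp
  have tb: "0 \<le> t*b" using t b by simp
  have \<kappa>: "0 < \<kappa>" unfolding \<kappa>_def using l tb by simp
  have coef_nn: "0 \<le> coef p r" for p r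
    unfolding coef_def using l t b A by simp
  define S where "S = {z::real\<times>real. t*(b * snd z + A) < fst z \<and> y0 < snd z}"
  have "{z \<in> space (lborel \<Otimes>\<^sub>M lborel). t*(b * snd z + A) < fst z \<and> y0 < snd z} \<in> sets (lborel \<Otimes>\<^sub>M lborel)"
    by measurable
  then have Smeas[measurable]: "S \<in> sets (lborel \<Otimes>\<^sub>M lborel)"
    by (simp add: S_def space_pair_measure)
  have ind': "indep_var lborel X lborel Y" using ind by (simp add: indep_var_eq measurable_lborel2)
  have J: "distributed M (lborel \<Otimes>\<^sub>M lborel) (\<lambda>\<omega>. (X \<omega>, Y \<omega>)) (\<lambda>(x,y). ennreal (g x) * ennreal (g y))"
    using distributed_joint_indep[OF sigma_finite_lborel sigma_finite_lborel gX gY ind'] by (simp add: g_def l_def)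
  have gm[measurable]: "g \<in> borel_measurable borel" unfolding g_def by simp
  have Eset: "{\<omega>\<in>space M. t*(b*Y \<omega> + A) < X \<omega> \<and> y0 < Y \<omega>} = (\<lambda>\<omega>. (X \<omega>, Y \<omega>)) -` S \<inter> space M"
    by (auto simp: S_def)
  have "emeasure M {\<omega>\<in>space M. t*(b*Y \<omega> + A) < X \<omega> \<and> y0 < Y \<omega>}
      = (\<integral>\<^sup>+z. (case z of (x,y) \<Rightarrow> ennreal (g x) * ennreal (g y)) * indicator S z \<partial>(lborel \<Otimes>\<^sub>M lborel))"
    unfolding Eset by (rule distributed_emeasure[OF J Smeas])
  also have "\<dots> = (\<integral>\<^sup>+y. (\<integral>\<^sup>+x. (case (x,y) of (x,y) \<Rightarrow> ennreal (g x) * ennreal (g y)) * indicator S (x,y) \<partial>lborel) \<partial>lborel)"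
    by (rule lborel_pair.nn_integral_snd[symmetric]) measurable
  also have "\<dots> = (\<integral>\<^sup>+y. ennreal (g y * (\<Sum>p<m. (l*(t*(b*y+A)))^p * exp (-(l*(t*(b*y+A)))) / fact p)) * indicator {y0<..} y \<partial>lborel)"
  proof (intro nn_integral_cong)
    fix y :: real
    have "(\<integral>\<^sup>+x. (case (x,y) of (x,y) \<Rightarrow> ennreal (g x) * ennreal (g y)) * indicator S (x,y) \<partial>lborel)
        = (\<integral>\<^sup>+x. (ennreal (g y) * indicator {y0<..} y) * (ennreal (g x) * indicator {t*(b*y+A)<..} x) \<partial>lborel)"
      by (intro nn_integral_cong) (auto simp: S_def mult.commute split: split_indicator)
    also have "\<dots> = (ennreal (g y) * indicator {y0<..} y) * (\<integral>\<^sup>+x. ennreal (g x) * indicator {t*(b*y+A)<..} x \<partial>lborel)"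
      by (rule nn_integral_cmult) measurable
    also have "\<dots> = ennreal (g y * (\<Sum>p<m. (l*(t*(b*y+A)))^p * exp (-(l*(t*(b*y+A)))) / fact p)) * indicator {y0<..} y"
    proof (cases "y0 < y")
      case True
      then have "0 \<le> t*(b*y+A)" using t b A y0 by simp
      then have "(\<integral>\<^sup>+x. ennreal (g x) * indicator {t*(b*y+A)<..} x \<partial>lborel)
          = ennreal (\<Sum>p<m. (l*(t*(b*y+A)))^p * exp (-(l*(t*(b*y+A)))) / fact p)"
        unfolding g_def using erlang_tail[OF _ l, of "t*(b*y+A)" k] mk by simp
      moreover have "0 \<le> g y" unfolding g_def using l by simp
      ultimately show ?thesis using True by (simp add: ennreal_mult')
    qed simp
    finally show "(\<integral>\<^sup>+x. (case (x,y) of (x,y) \<Rightarrow> ennreal (g x) * ennreal (g y)) * indicator S (x,y) \<partial>lborel)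
        = ennreal (g y * (\<Sum>p<m. (l*(t*(b*y+A)))^p * exp (-(l*(t*(b*y+A)))) / fact p)) * indicator {y0<..} y" .
  qed
  also have "\<dots> = (\<integral>\<^sup>+y. (\<Sum>p<m. \<Sum>r\<le>p. ennreal (coef p r) * (ennreal (y^(k+r) * exp (-\<kappa>*y)) * indicator {y0<..} y)) \<partial>lborel)"
  proof (intro nn_integral_cong)
    fix y :: real
    show "ennreal (g y * (\<Sum>p<m. (l*(t*(b*y+A)))^p * exp (-(l*(t*(b*y+A)))) / fact p)) * indicator {y0<..} y
        = (\<Sum>p<m. \<Sum>r\<le>p. ennreal (coef p r) * (ennreal (y^(k+r) * exp (-\<kappa>*y)) * indicator {y0<..} y))"
    proof (cases "y0 < y")
      case True
      then have y: "0 \<le> y" using y0 by simp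
      have gid: "g y * (\<Sum>p<m. (l*(t*(b*y+A)))^p * exp (-(l*(t*(b*y+A)))) / fact p)
         = (\<Sum>p<m. \<Sum>r\<le>p. coef p r * (y^(k+r) * exp (-\<kappa>*y)))"
        unfolding g_def coef_def \<kappa>_def l_def mk using pointwise_identity[OF y, of k t b A] by simp
      have w: "0 \<le> y^(k+r) * exp (-\<kappa>*y)" for r using y by simp
      have cw: "0 \<le> coef p r * (y^(k+r) * exp (-\<kappa>*y))" for p r using coef_nn[of p r] w[of r] by simp
      have "ennreal (\<Sum>p<m. \<Sum>r\<le>p. coef p r * (y^(k+r) * exp (-\<kappa>*y)))
          = (\<Sum>p<m. ennreal (\<Sum>r\<le>p. coef p r * (y^(k+r) * exp (-\<kappa>*y))))"
        using cw by (intro sum_ennreal[symmetric] sum_nonneg) auto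
      also have "\<dots> = (\<Sum>p<m. \<Sum>r\<le>p. ennreal (coef p r * (y^(k+r) * exp (-\<kappa>*y))))"
        using cw by (intro sum.cong refl sum_ennreal[symmetric]) auto
      also have "\<dots> = (\<Sum>p<m. \<Sum>r\<le>p. ennreal (coef p r) * ennreal (y^(k+r) * exp (-\<kappa>*y)))"
        using coef_nn w by (intro sum.cong refl ennreal_mult) auto
      finally have "ennreal (g y * (\<Sum>p<m. (l*(t*(b*y+A)))^p * exp (-(l*(t*(b*y+A)))) / fact p))
         = (\<Sum>p<m. \<Sum>r\<le>p. ennreal (coef p r) * ennreal (y^(k+r) * exp (-\<kappa>*y)))"
        by (simp only: gid)
      then show ?thesis using True by (simp add: sum_distrib_right mult.assoc)
    qed simp
  qed
  also have "\<dots> = (\<Sum>p<m. \<Sum>r\<le>p. ennreal (coef p r) * (\<integral>\<^sup>+y. ennreal (y^(k+r) * exp (-\<kappa>*y)) * indicator {y0<..} y \<partial>lborel))"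
  proof -
    have m1: "(\<lambda>y. \<Sum>r\<le>p. ennreal (coef p r) * (ennreal (y^(k+r) * exp (-\<kappa>*y)) * indicator {y0<..} y)) \<in> borel_measurable lborel" for p
      by measurable
    have m2: "(\<lambda>y. ennreal (y^(k+r) * exp (-\<kappa>*y)) * indicator {y0<..} y) \<in> borel_measurable lborel" for r
      by measurable
    show ?thesis
      by (simp add: nn_integral_sum m1 m2 nn_integral_cmult)
  qed
  also have "\<dots> = (\<Sum>p<m. \<Sum>r\<le>p. ennreal (coef p r) * ennreal (\<kappa> powr (-(real (k+r)+1)) * upper_Gamma (real (Suc (k+r))) (\<kappa>*y0)))"
    using tail_pow_exp_scaled[OF \<kappa>, of y0] y0 by simp
  also have "\<dots> = ennreal (\<Sum>p<m. \<Sum>r\<le>p. coef p r * (\<kappa> powr (-(real (k+r)+1)) * upper_Gamma (real (Suc (k+r))) (\<kappa>*y0)))"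
  proof -
    let ?v = "\<lambda>r. \<kappa> powr (-(real (k+r)+1)) * upper_Gamma (real (Suc (k+r))) (\<kappa>*y0)"
    have v: "0 \<le> ?v r" for r using upper_Gamma_nonneg by simp
    have cv: "0 \<le> coef p r * ?v r" for p r using coef_nn[of p r] v[of r] by simp
    have "ennreal (\<Sum>p<m. \<Sum>r\<le>p. coef p r * ?v r) = (\<Sum>p<m. ennreal (\<Sum>r\<le>p. coef p r * ?v r))"
      using cv by (intro sum_ennreal[symmetric] sum_nonneg) auto
    also have "\<dots> = (\<Sum>p<m. \<Sum>r\<le>p. ennreal (coef p r * ?v r))"
      using cv by (intro sum.cong refl sum_ennreal[symmetric]) auto
    also have "\<dots> = (\<Sum>p<m. \<Sum>r\<le>p. ennreal (coef p r) * ennreal (?v r))"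
      using coef_nn v by (intro sum.cong refl ennreal_mult) auto
    finally show ?thesis by (rule sym)
  qed
  finally have "measure M {\<omega>\<in>space M. t*(b*Y \<omega> + A) < X \<omega> \<and> y0 < Y \<omega>}
     = (\<Sum>p<m. \<Sum>r\<le>p. coef p r * (\<kappa> powr (-(real (k+r)+1)) * upper_Gamma (real (Suc (k+r))) (\<kappa>*y0)))"
    using coef_nn upper_Gamma_nonneg by (simp add: measure_def sum_nonneg)
  then show ?thesis by (simp add: coef_def \<kappa>_def l_def)
qed

lemma event_iff:
  fixes x y Pc Pr Cc u v I s \<gamma> \<gamma>th :: real
  assumes Pc: "Pc > 0" and Pr: "Pr > 0" and Cc: "Cc > 0" and u: "u > 0" and v: "v > 0"
    and I: "I \<ge> 0" and s: "s > 0" and g: "\<gamma> > 0" and gth: "\<gamma>th > 0"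
  shows "(\<gamma> < Pc * Cc * u * x/(Pr * Cc * v * y + I + s) \<and> \<gamma>th < Pr * Cc * v * y/(I+s))
     \<longleftrightarrow> (\<gamma>/Pc * (v/u * Pr * y + (I/(Cc * u) + s/(Cc * u))) < x \<and> \<gamma>th * (I/(Cc * v) + s/(Cc * v))/Pr < y)"
proof -
  have Is: "I + s > 0" using I s by simp
  have iff2: "\<gamma>th < Pr * Cc * v * y/(I+s) \<longleftrightarrow> \<gamma>th * (I/(Cc * v) + s/(Cc * v))/Pr < y"
  proof -
    have "\<gamma>th < Pr * Cc * v * y/(I+s) \<longleftrightarrow> \<gamma>th * (I+s) < Pr * Cc * v * y" using Is by (simp add: pos_less_divide_eq)
    also have "\<dots> \<longleftrightarrow> \<gamma>th * (I+s)/(Pr * Cc * v) < y" using Pr Cc v by (simp add: pos_divide_less_eq mult.commute)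
    also have "\<gamma>th * (I+s)/(Pr * Cc * v) = \<gamma>th * (I/(Cc * v) + s/(Cc * v))/Pr" using Pr Cc v by (simp add: field_simps)
    finally show ?thesis .
  qed
  have iff1: "\<gamma> < Pc * Cc * u * x/(Pr * Cc * v * y + I + s) \<longleftrightarrow> \<gamma>/Pc * (v/u * Pr * y + (I/(Cc * u) + s/(Cc * u))) < x" if y: "y > 0"
  proof -
    have D: "Pr * Cc * v * y + I + s > 0" using Pr Cc v y I s by (simp add: add_pos_nonneg)
    have "\<gamma> < Pc * Cc * u * x/(Pr * Cc * v * y + I + s) \<longleftrightarrow> \<gamma> * (Pr * Cc * v * y + I + s) < Pc * Cc * u * x" using D by (simp add: pos_less_divide_eq)
    also have "\<dots> \<longleftrightarrow> \<gamma> * (Pr * Cc * v * y + I + s)/(Pc * Cc * u) < x" using Pc Cc u by (simp add: pos_divide_less_eq mult.commute)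
    also have "\<gamma> * (Pr * Cc * v * y + I + s)/(Pc * Cc * u) = \<gamma>/Pc * (v/u * Pr * y + (I/(Cc * u) + s/(Cc * u)))" using Pc Cc u by (simp add: field_simps)
    finally show ?thesis .
  qed
  have pos: "0 < \<gamma>th * (I/(Cc * v) + s/(Cc * v))/Pr" using gth Is Cc v Pr by (simp add: add_nonneg_pos I s)
  show ?thesis
  proof (cases "y > 0")
    case True then show ?thesis using iff1 iff2 by blast
  next
    case False then show ?thesis using iff2 pos by auto
  qed
qed

lemma nak_meas: "nakagami_pow_density m \<in> borel_measurable borel"
  by (auto simp add: nakagami_pow_density_def[abs_def])

theorem theorem2:
  fixes M :: "'w measure" and X Y :: "'w \<Rightarrow> real" and m :: nat
    and Pc Pr PBS Cc Cr dc dr \<alpha>c \<alpha>r \<beta> B \<sigma>\<tau>2 \<sigma>2 \<gamma>th \<gamma>SIC :: real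
  assumes "prob_space M"
    and "m > 0"
    and "distributed M lborel X (\<lambda>x. ennreal (nakagami_pow_density m x))"
    and "distributed M lborel Y (\<lambda>x. ennreal (nakagami_pow_density m x))"
    and "prob_space.indep_var M borel X borel Y"
    and "Pc > 0" "Pr > 0" "PBS > 0" "Cc > 0" "Cr > 0" "dc > 0" "dr > 0"
    and "\<alpha>c > 0" "\<alpha>r > 0" "\<beta> > 0" "B > 0" "\<sigma>\<tau>2 > 0" "\<sigma>2 > 0" "\<gamma>th > 0" "\<gamma>SIC > 0"
  shows
   "let \<gamma>2 = (2 * pi)^2 / 12;
        I = PBS * Cr * dr powr (- \<alpha>r) * \<gamma>2 * \<beta>^2 * B^2 * \<sigma>\<tau>2;
        \<gamma>c = (\<lambda>\<omega>. Pc * Cc * dc powr (- \<alpha>c) * X \<omega> / (Pr * Cc * dr powr (- \<alpha>c) * Y \<omega> + I + \<sigma>2));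
        \<gamma>r = (\<lambda>\<omega>. Pr * Cc * dr powr (- \<alpha>c) * Y \<omega> / (I + \<sigma>2));
        a1 = I / (Cc * dc powr (- \<alpha>c));
        a2 = \<sigma>2 / (Cc * dc powr (- \<alpha>c));
        a3 = dr powr (- \<alpha>c) / dc powr (- \<alpha>c);
        a4 = I / (Cc * dr powr (- \<alpha>c));
        a5 = \<sigma>2 / (Cc * dr powr (- \<alpha>c));
        K = \<gamma>SIC * a3 * Pr / Pc + 1
    in 1 - measure M {\<omega> \<in> space M. \<gamma>c \<omega> > \<gamma>SIC \<and> \<gamma>r \<omega> > \<gamma>th}
       = 1 - (\<Sum>p<m. \<Sum>r\<le>p.
              real (p choose r) * (a1 + a2) ^ (p - r) * (a3 * Pr) ^ r
                / (Gamma (real m) * real m ^ r * fact p)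
              * (real m * \<gamma>SIC / Pc) ^ p
              * exp (- (real m * \<gamma>SIC * (a1 + a2) / Pc))
              * K powr (- real (r + m))
              * upper_Gamma (real (r + m)) (\<gamma>th * real m * (a4 + a5) / Pr * K))"
proof -
  interpret prob_space M by (rule assms(1))
  obtain k where mk: "m = Suc k" using assms(2) by (cases m) auto
  note nak_meas[measurable]
  have e_meas: "(\<lambda>x. ennreal (erlang_density k (real m) x)) \<in> borel_measurable lborel" by measurable
  have n_meas: "(\<lambda>x. ennreal (nakagami_pow_density m x)) \<in> borel_measurable lborel" by measurable
  have gX: "distributed M lborel X (\<lambda>x. ennreal (erlang_density k (real m) x))"
    by (rule distributed_cong_density[OF nakagami_erlang[OF mk] e_meas n_meas, THEN iffD1, OF assms(3)])
  have gY: "distributed M lborel Y (\<lambda>x. ennreal (erlang_density k (real m) x))"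
    by (rule distributed_cong_density[OF nakagami_erlang[OF mk] e_meas n_meas, THEN iffD1, OF assms(4)])
  define I0 where "I0 = PBS * Cr * dr powr (- \<alpha>r) * ((2 * pi)^2 / 12) * \<beta>^2 * B^2 * \<sigma>\<tau>2"
  define u where "u = dc powr (- \<alpha>c)"
  define v where "v = dr powr (- \<alpha>c)"
  define a1 where "a1 = I0 / (Cc * u)"
  define a2 where "a2 = \<sigma>2 / (Cc * u)"
  define a3 where "a3 = v / u"
  define a4 where "a4 = I0 / (Cc * v)"
  define a5 where "a5 = \<sigma>2 / (Cc * v)"
  define K where "K = \<gamma>SIC * a3 * Pr / Pc + 1"
  have upos: "u > 0" unfolding u_def using assms by simp
  have vpos: "v > 0" unfolding v_def using assms by simp
  have I0nn: "I0 \<ge> 0" unfolding I0_def using assms by simp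
  have a12: "a1 + a2 \<ge> 0" unfolding a1_def a2_def using I0nn upos vpos assms by simp
  have a3p: "a3 > 0" unfolding a3_def using upos vpos by simp
  have a45: "a4 + a5 > 0" unfolding a4_def a5_def using I0nn upos vpos assms by (simp add: add_nonneg_pos)
  have Kpos: "K > 0" unfolding K_def using a3p assms by (simp add: add_nonneg_pos)
  have ev: "(\<gamma>SIC < Pc * Cc * u * x / (Pr * Cc * v * y + I0 + \<sigma>2) \<and> \<gamma>th < Pr * Cc * v * y / (I0 + \<sigma>2))
     \<longleftrightarrow> (\<gamma>SIC / Pc * (a3 * Pr * y + (a1 + a2)) < x \<and> \<gamma>th * (a4 + a5) / Pr < y)" for x y
    unfolding a1_def a2_def a3_def a4_def a5_def
    by (rule event_iff) (use assms upos vpos I0nn in auto)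
  have mp: "measure M {\<omega>\<in>space M. \<gamma>SIC / Pc * (a3 * Pr * Y \<omega> + (a1 + a2)) < X \<omega> \<and> \<gamma>th * (a4 + a5) / Pr < Y \<omega>}
    = (\<Sum>p<m. \<Sum>r\<le>p. (real m^(Suc k)/fact k * (real (p choose r) * (a1 + a2)^(p-r) * (a3 * Pr)^r * (real m*(\<gamma>SIC / Pc))^p * exp (-(real m*(\<gamma>SIC / Pc)*(a1 + a2))) / fact p))
        * ((real m*(\<gamma>SIC / Pc*(a3 * Pr)+1)) powr (-(real (k+r)+1)) * upper_Gamma (real (Suc (k+r))) (real m*(\<gamma>SIC / Pc*(a3 * Pr)+1)*(\<gamma>th * (a4 + a5) / Pr))))"
    by (rule main_prob[OF assms(1) mk gX gY assms(5)]) (use assms a12 a3p a45 in auto)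
  have K1: "\<gamma>SIC / Pc*(a3 * Pr)+1 = K" unfolding K_def by simp
  have G: "Gamma (real m) = fact k" using Gamma_fact[of k] mk by (simp add: add.commute)
  have termeq: "(real m^(Suc k)/fact k * (real (p choose r) * (a1 + a2)^(p-r) * (a3 * Pr)^r * (real m*(\<gamma>SIC / Pc))^p * exp (-(real m*(\<gamma>SIC / Pc)*(a1 + a2))) / fact p))
        * ((real m*(\<gamma>SIC / Pc*(a3 * Pr)+1)) powr (-(real (k+r)+1)) * upper_Gamma (real (Suc (k+r))) (real m*(\<gamma>SIC / Pc*(a3 * Pr)+1)*(\<gamma>th * (a4 + a5) / Pr)))
      = real (p choose r) * (a1 + a2) ^ (p - r) * (a3 * Pr) ^ r
                / (Gamma (real m) * real m ^ r * fact p)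
              * (real m * \<gamma>SIC / Pc) ^ p
              * exp (- (real m * \<gamma>SIC * (a1 + a2) / Pc))
              * K powr (- real (r + m))
              * upper_Gamma (real (r + m)) (\<gamma>th * real m * (a4 + a5) / Pr * K)" for p r
  proof -
    have R1: "real (Suc (k+r)) = real (r + m)" using mk by simp
    have R2: "-(real (k+r)+1) = - real (r + m)" using mk by simp
    have UA: "real m*K*(\<gamma>th * (a4 + a5) / Pr) = \<gamma>th * real m * (a4 + a5) / Pr * K" by simp
    have mpos: "real m > 0" using mk by simp
    have pw: "(real m*K) powr (- real (r + m)) = K powr (- real (r + m)) / (real m^r * real m^(Suc k))"
    proof -
      have "(real m*K) powr (- real (r + m)) = real m powr (- real (r + m)) * K powr (- real (r + m))"
        using mpos Kpos by (simp add: powr_mult)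
      also have "real m powr (- real (r + m)) = 1 / real m ^ (r + m)"
        using mpos by (subst powr_minus, subst powr_realpow[OF mpos]) (simp add: divide_inverse)
      finally show ?thesis using mk by (simp add: power_add)
    qed
    have E: "exp (-(real m*(\<gamma>SIC / Pc)*(a1 + a2))) = exp (- (real m * \<gamma>SIC * (a1 + a2) / Pc))" by simp
    have P: "(real m*(\<gamma>SIC / Pc))^p = (real m * \<gamma>SIC / Pc) ^ p" by simp
    show ?thesis unfolding K1 R1 R2 UA pw G E P
      using mpos by (simp add: field_simps)
  qed
  have set: "{\<omega> \<in> space M. \<gamma>SIC < Pc * Cc * u * X \<omega> / (Pr * Cc * v * Y \<omega> + I0 + \<sigma>2) \<and> \<gamma>th < Pr * Cc * v * Y \<omega> / (I0 + \<sigma>2)}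
     = {\<omega>\<in>space M. \<gamma>SIC / Pc * (a3 * Pr * Y \<omega> + (a1 + a2)) < X \<omega> \<and> \<gamma>th * (a4 + a5) / Pr < Y \<omega>}"
    by (simp only: ev)
  show ?thesis
    unfolding Let_def I0_def[symmetric] u_def[symmetric] v_def[symmetric]
    unfolding a1_def[symmetric] a2_def[symmetric] a3_def[symmetric] a4_def[symmetric] a5_def[symmetric]
    unfolding K_def[symmetric]
    unfolding set mp termeq ..
qed

end
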